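(* Let $p,q,K$ be parameters with $p\neq 0$, and let $a,b,c,d$ be generators of an associative algebra over $\mathbb{C}$ (extended by the parameters) subject to the relations $$ab=qba,\quad pac=ca,\quad ad=da+(q-p)bc,\quad pqbc=cb,\quad pbd=db,\quad cd=qdc.$$ Let $T=\begin{pmatrix} a&b\\ c&d\end{pmatrix}$ and $$\hat R(K;p,q)=\begin{pmatrix}1&0&0&0\\0&1-K&K/p&0\\0&Kq&1-Kq/p&0\\0&0&0&1\end{pmatrix},\qquad R=P\hat R(K;p,q).$$ Then for every value of $K$, $$R\,T_1T_2=T_2T_1\,R .$$
   Context: All $4\times4$ matrices are written in the ordered basis $e_1\otimes e_1,\ e_1\otimes e_2,\ e_2\otimes e_1,\ e_2\otimes e_2$ of $\mathbb{C}^2\otimes\mathbb{C}^2$, with double indices $(ij)$ ordered $11,12,21,22$. $P$ is the permutation (flip) matrix, i.e. the $4\times4$ matrix that swaps the second and third basis vectors. $T_1=T\otimes I_2$ and $T_2=I_2\otimes T$, so $T_1T_2$ has entries $(T_1T_2)_{(ij),(kl)}=T_{ik}T_{jl}$ and $T_2T_1$ has entries $(T_2T_1)_{(ij),(kl)}=T_{jl}T_{ik}$ (the entries of $T$ do not commute, so the order of factors matters). The equality $RT_1T_2=T_2T_1R$ is an equality of $4\times 4$ matrices with entries in the algebra. *)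

theory Defs
  imports Main
begin

text \<open>Matrices with entries in a (possibly noncommutative) ring are functions
  nat => nat => 'a; only indices 0..<n are meaningful. Index 0,1 of a 2x2 matrix
  correspond to 1,2 in the paper; the double index (ij) of a 4x4 matrix is
  encoded as 2*i+j, giving the order 11,12,21,22.\<close>

definition mmul :: "nat \<Rightarrow> (nat \<Rightarrow> nat \<Rightarrow> 'a::semiring_1) \<Rightarrow> (nat \<Rightarrow> nat \<Rightarrow> 'a) \<Rightarrow> nat \<Rightarrow> nat \<Rightarrow> 'a" where
  "mmul n A B = (\<lambda>i j. \<Sum>k<n. A i k * B k j)"

definition mat_of_rows :: "'a list list \<Rightarrow> nat \<Rightarrow> nat \<Rightarrow> 'a" where
  "mat_of_rows rows = (\<lambda>i j. rows ! i ! j)"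

definition id2 :: "nat \<Rightarrow> nat \<Rightarrow> 'a::semiring_1" where
  "id2 = (\<lambda>i j. if i = j then 1 else 0)"

definition kron2 :: "(nat \<Rightarrow> nat \<Rightarrow> 'a::semiring_1) \<Rightarrow> (nat \<Rightarrow> nat \<Rightarrow> 'a) \<Rightarrow> nat \<Rightarrow> nat \<Rightarrow> 'a" where
  "kron2 A B = (\<lambda>i j. A (i div 2) (j div 2) * B (i mod 2) (j mod 2))"

definition Tmat :: "'a \<Rightarrow> 'a \<Rightarrow> 'a \<Rightarrow> 'a \<Rightarrow> nat \<Rightarrow> nat \<Rightarrow> 'a" where
  "Tmat a b c d = mat_of_rows [[a, b], [c, d]]"

definition T1 :: "(nat \<Rightarrow> nat \<Rightarrow> 'a::semiring_1) \<Rightarrow> nat \<Rightarrow> nat \<Rightarrow> 'a" where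
  "T1 T = kron2 T id2"

definition T2 :: "(nat \<Rightarrow> nat \<Rightarrow> 'a::semiring_1) \<Rightarrow> nat \<Rightarrow> nat \<Rightarrow> 'a" where
  "T2 T = kron2 id2 T"

definition Pflip :: "nat \<Rightarrow> nat \<Rightarrow> 'a::semiring_1" where
  "Pflip = mat_of_rows [[1,0,0,0],[0,0,1,0],[0,1,0,0],[0,0,0,1]]"

text \<open>Rhat(K;p,q); pinv is the inverse of p, so K/p = K * pinv.\<close>
definition Rhat :: "'a::ring_1 \<Rightarrow> 'a \<Rightarrow> 'a \<Rightarrow> 'a \<Rightarrow> nat \<Rightarrow> nat \<Rightarrow> 'a" where
  "Rhat K p pinv q = mat_of_rows
     [[1, 0, 0, 0],
      [0, 1 - K, K * pinv, 0],
      [0, K * q, 1 - K * q * pinv, 0],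
      [0, 0, 0, 1]]"

definition Rmat :: "'a::ring_1 \<Rightarrow> 'a \<Rightarrow> 'a \<Rightarrow> 'a \<Rightarrow> nat \<Rightarrow> nat \<Rightarrow> 'a" where
  "Rmat K p pinv q = mmul 4 Pflip (Rhat K p pinv q)"

end

theory Submission
  imports Defs
begin

theorem mainTheorem1:
  fixes a b c d p pinv q K :: "'a::ring_1"
  assumes central: "\<And>x. x \<in> {p, pinv, q, K} \<Longrightarrow> \<forall>y \<in> {a, b, c, d, p, pinv, q, K}. x * y = y * x"
    and p_inv: "p * pinv = 1" "pinv * p = 1"
    and r1: "a * b = q * (b * a)"
    and r2: "p * (a * c) = c * a"
    and r3: "a * d = d * a + (q - p) * (b * c)"
    and r4: "p * q * (b * c) = c * b"
    and r5: "p * (b * d) = d * b"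
    and r6: "c * d = q * (d * c)"
  shows "\<forall>i<4. \<forall>j<4.
    mmul 4 (Rmat K p pinv q) (mmul 4 (T1 (Tmat a b c d)) (T2 (Tmat a b c d))) i j =
    mmul 4 (mmul 4 (T2 (Tmat a b c d)) (T1 (Tmat a b c d))) (Rmat K p pinv q) i j"
proof -
  have cen: "x * y = y * x" if "x \<in> {p, pinv, q, K}" "y \<in> {a, b, c, d, p, pinv, q, K}" for x y
    using central that by blast
  have cl: "y * (x * z) = x * (y * z)" if "x \<in> {p, pinv, q, K}" "y \<in> {a, b, c, d, p, pinv, q, K}" for x y z
    by (metis cen that mult.assoc)
  have cr: "y * x = x * y" if "x \<in> {p, pinv, q, K}" "y \<in> {a, b, c, d}" for x y
    by (rule sym, rule cen) (use that in auto)
  have ac: "a * c = pinv * (c * a)"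
    by (metis r2 p_inv(2) mult.assoc mult_1_left)
  have bd: "b * d = pinv * (d * b)"
    by (metis r5 p_inv(2) mult.assoc mult_1_left)
  have cb: "c * b = p * (q * (b * c))" using r4 by (simp add: mult.assoc)
  have pp: "p * (pinv * z) = z" "pinv * (p * z) = z" for z
    by (simp_all add: mult.assoc[symmetric] p_inv)
  have q4: "\<And>P. (\<forall>i<(4::nat). P i) = (P 0 \<and> P 1 \<and> P 2 \<and> P 3)"
    by (auto simp: numeral_eq_Suc less_Suc_eq)
  have s4: "\<And>f. (\<Sum>k<(4::nat). f k) = f 0 + f 1 + f 2 + (f 3 :: 'a)"
    by (simp add: numeral_eq_Suc add.assoc)
  have L1: "a * (p * z) = p * (a * z)" "b * (p * z) = p * (b * z)" "c * (p * z) = p * (c * z)" "d * (p * z) = p * (d * z)" "a * (pinv * z) = pinv * (a * z)" "b * (pinv * z) = pinv * (b * z)" "c * (pinv * z) = pinv * (c * z)" "d * (pinv * z) = pinv * (d * z)" "a * (q * z) = q * (a * z)" "b * (q * z) = q * (b * z)" "c * (q * z) = q * (c * z)" "d * (q * z) = q * (d * z)" "a * (K * z) = K * (a * z)" "b * (K * z) = K * (b * z)" "c * (K * z) = K * (c * z)" "d * (K * z) = K * (d * z)" for z by (rule cl; simp)+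
  have L2: "a * p = p * a" "b * p = p * b" "c * p = p * c" "d * p = p * d" "a * pinv = pinv * a" "b * pinv = pinv * b" "c * pinv = pinv * c" "d * pinv = pinv * d" "a * q = q * a" "b * q = q * b" "c * q = q * c" "d * q = q * d" "a * K = K * a" "b * K = K * b" "c * K = K * c" "d * K = K * d" by (rule cr; simp)+
  have L3: "pinv * (p * z) = p * (pinv * z)" "q * (p * z) = p * (q * z)" "q * (pinv * z) = pinv * (q * z)" "p * (K * z) = K * (p * z)" "pinv * (K * z) = K * (pinv * z)" "q * (K * z) = K * (q * z)" for z by (rule cl; simp)+
  have L4: "pinv * p = p * pinv" "q * p = p * q" "q * pinv = pinv * q" "p * K = K * p" "pinv * K = K * pinv" "q * K = K * q" by (rule cen; simp)+
  show ?thesis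
    unfolding q4 mmul_def s4
    unfolding Rmat_def Rhat_def Pflip_def T1_def T2_def Tmat_def kron2_def id2_def mmul_def mat_of_rows_def s4
    apply (simp add: mult.assoc L1 L2 L3 L4 r1 ac r3 cb bd r6 algebra_simps pp)
    done
qed
end
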